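(* The tropical Zariski topology on $\mathbb{R}^n$, whose closed sets are the congruence varieties $\boldsymbol{V}(E)$ for congruences $E$ on $\overline{\boldsymbol{T}(X_1,\ldots,X_n)}$, coincides with the Euclidean topology on $\mathbb{R}^n$.
   Context: $\boldsymbol{T}=\mathbb{R}\cup\{-\infty\}$ with $a\oplus b=\max\{a,b\}$, $a\odot b=a+b$. $\overline{\boldsymbol{T}[X_1,\ldots,X_n]}$ is the tropical polynomial semiring modulo identifying polynomials defining the same function $\boldsymbol{T}^n\to\boldsymbol{T}$; it is cancellative and $\overline{\boldsymbol{T}(X_1,\ldots,X_n)}$ is its semifield of fractions. Each element defines a function $\mathbb{R}^n\to\boldsymbol{T}$ (quotients evaluated as differences). A congruence is an equivalence relation compatible with $\oplus$ and $\odot$; $\boldsymbol{V}(E)=\{x\in\mathbb{R}^n\mid f(x)=g(x)\ \forall(f,g)\in E\}$. (These sets are closed under arbitrary intersections and finite unions and include $\varnothing$ and $\mathbb{R}^n$, so they form the closed sets of a topology.) *)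

theory Defs
  imports "HOL-Analysis.Analysis"
begin

text \<open>Tropical semiring T = reals with -infinity, modelled inside ereal
(only -infinity and finite values ever occur). Points of R^n are of type real^'n.\<close>

text \<open>A tropical polynomial is a finite set of monomials (exponent vector, real coefficient);
the empty set is the tropical zero polynomial -infinity.\<close>
definition trop_eval :: "(('n::finite \<Rightarrow> nat) \<times> real) set \<Rightarrow> real^'n \<Rightarrow> ereal" where
  "trop_eval P x = (SUP m\<in>P. ereal (snd m + (\<Sum>i\<in>UNIV. real (fst m i) * x $ i)))"

text \<open>Elements of the semifield of fractions of the polynomial function semiring, identified with
the functions R^n -> T they define: f/g evaluated as f(x) - g(x), with g a nonzero polynomial.\<close>
definition trop_frac :: "(real^'n::finite \<Rightarrow> ereal) set" where
  "trop_frac = {(\<lambda>x. trop_eval P x - trop_eval Q x) | P Q. finite P \<and> finite Q \<and> Q \<noteq> {}}"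

definition trop_congruence :: "('a \<Rightarrow> ereal) set \<Rightarrow> (('a \<Rightarrow> ereal) \<times> ('a \<Rightarrow> ereal)) set \<Rightarrow> bool" where
  "trop_congruence S E \<longleftrightarrow> equiv S E \<and>
     (\<forall>(a,b)\<in>E. \<forall>(c,d)\<in>E.
        ((\<lambda>x. max (a x) (c x)), (\<lambda>x. max (b x) (d x))) \<in> E \<and>
        ((\<lambda>x. a x + c x), (\<lambda>x. b x + d x)) \<in> E)"

definition trop_V :: "((real^'n::finite \<Rightarrow> ereal) \<times> (real^'n \<Rightarrow> ereal)) set \<Rightarrow> (real^'n) set" where
  "trop_V E = {x. \<forall>(f,g)\<in>E. f x = g x}"

end

theory Submission
  imports Defs
begin

definition Lm :: "(('n::finite \<Rightarrow> nat) \<times> real) \<Rightarrow> real^'n \<Rightarrow> real" where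
  "Lm m y = snd m + (\<Sum>i\<in>UNIV. real (fst m i) * y $ i)"

definition pmul :: "(('n::finite \<Rightarrow> nat) \<times> real) set \<Rightarrow> (('n \<Rightarrow> nat) \<times> real) set \<Rightarrow> (('n \<Rightarrow> nat) \<times> real) set" where
  "pmul P Q = (\<lambda>(p,q). (\<lambda>i. fst p i + fst q i, snd p + snd q)) ` (P \<times> Q)"

lemma Lm_mul: "Lm (\<lambda>i. fst p i + fst q i, snd p + snd q) y = Lm p y + Lm q y"
  unfolding Lm_def by (simp add: algebra_simps sum.distrib)

lemma eval_empty: "trop_eval {} y = -\<infinity>"
  unfolding trop_eval_def by (simp add: bot_ereal_def)

lemma eval_fin:
  assumes "finite P" "P \<noteq> {}"
  shows "trop_eval P y = ereal (Max ((\<lambda>m. Lm m y) ` P))"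
proof (rule antisym)
  show "trop_eval P y \<le> ereal (Max ((\<lambda>m. Lm m y) ` P))"
    unfolding trop_eval_def
    by (rule SUP_least) (use assms in \<open>auto simp: Lm_def[symmetric]\<close>)
next
  have "Max ((\<lambda>m. Lm m y) ` P) \<in> (\<lambda>m. Lm m y) ` P" using assms by (intro Max_in) auto
  then obtain m where m: "m \<in> P" "Max ((\<lambda>m. Lm m y) ` P) = Lm m y" by auto
  show "ereal (Max ((\<lambda>m. Lm m y) ` P)) \<le> trop_eval P y"
  proof -
    have "ereal (Lm m y) \<le> trop_eval P y"
      unfolding trop_eval_def Lm_def by (rule SUP_upper[OF m(1)])
    then show ?thesis using m(2) by simp
  qed
qed

lemma eval_not_inf: "finite P \<Longrightarrow> trop_eval P y \<noteq> \<infinity>"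
  by (cases "P = {}") (auto simp: eval_empty eval_fin)

lemma eval_nonempty_real: "finite P \<Longrightarrow> P \<noteq> {} \<Longrightarrow> \<bar>trop_eval P y\<bar> \<noteq> \<infinity>"
  by (auto simp: eval_fin)

lemma eval_union: "trop_eval (P \<union> Q) y = max (trop_eval P y) (trop_eval Q y)"
  unfolding trop_eval_def by (simp add: SUP_union sup_max)

lemma eval_mul:
  assumes "finite P" "finite Q"
  shows "trop_eval (pmul P Q) y = trop_eval P y + trop_eval Q y"
proof (cases "P = {} \<or> Q = {}")
  case True
  then show ?thesis
    using eval_not_inf[OF assms(1), of y] eval_not_inf[OF assms(2), of y]
    by (auto simp: pmul_def eval_empty)
next
  case False
  then have ne: "P \<noteq> {}" "Q \<noteq> {}" by auto
  have fin: "finite (pmul P Q)" "pmul P Q \<noteq> {}" using assms ne by (auto simp: pmul_def)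
  have "Max ((\<lambda>m. Lm m y) ` pmul P Q) = Max ((\<lambda>m. Lm m y) ` P) + Max ((\<lambda>m. Lm m y) ` Q)"
  proof (rule antisym)
    show "Max ((\<lambda>m. Lm m y) ` pmul P Q) \<le> Max ((\<lambda>m. Lm m y) ` P) + Max ((\<lambda>m. Lm m y) ` Q)"
      using fin assms ne by (auto simp: pmul_def Lm_mul intro!: add_mono Max_ge)
  next
    have "Max ((\<lambda>m. Lm m y) ` P) \<in> (\<lambda>m. Lm m y) ` P" using assms ne by (intro Max_in) auto
    then obtain p where p: "p \<in> P" "Max ((\<lambda>m. Lm m y) ` P) = Lm p y" by auto
    have "Max ((\<lambda>m. Lm m y) ` Q) \<in> (\<lambda>m. Lm m y) ` Q" using assms ne by (intro Max_in) auto
    then obtain q where q: "q \<in> Q" "Max ((\<lambda>m. Lm m y) ` Q) = Lm q y" by auto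
    have "(\<lambda>i. fst p i + fst q i, snd p + snd q) \<in> pmul P Q" using p q by (force simp: pmul_def)
    then have "Lm (\<lambda>i. fst p i + fst q i, snd p + snd q) y \<le> Max ((\<lambda>m. Lm m y) ` pmul P Q)"
      using fin by (intro Max_ge) auto
    then show "Max ((\<lambda>m. Lm m y) ` P) + Max ((\<lambda>m. Lm m y) ` Q) \<le> Max ((\<lambda>m. Lm m y) ` pmul P Q)"
      using p q by (simp add: Lm_mul)
  qed
  then show ?thesis using fin assms ne by (simp add: eval_fin)
qed

lemma pmul_finite: "finite P \<Longrightarrow> finite Q \<Longrightarrow> finite (pmul P Q)"
  by (simp add: pmul_def)

lemma pmul_ne: "P \<noteq> {} \<Longrightarrow> Q \<noteq> {} \<Longrightarrow> pmul P Q \<noteq> {}"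
  by (simp add: pmul_def)

lemma ereal_add_aux:
  fixes a b c d :: ereal
  assumes "a \<noteq> \<infinity>" "c \<noteq> \<infinity>" "\<bar>b\<bar> \<noteq> \<infinity>" "\<bar>d\<bar> \<noteq> \<infinity>"
  shows "(a - b) + (c - d) = (a + c) - (b + d)"
proof -
  obtain b' d' where "b = ereal b'" "d = ereal d'" using assms(3,4) by (cases b; cases d) auto
  then show ?thesis using assms(1,2) by (cases a; cases c) auto
qed

lemma ereal_max_aux:
  fixes a b c d :: ereal
  assumes "a \<noteq> \<infinity>" "c \<noteq> \<infinity>" "\<bar>b\<bar> \<noteq> \<infinity>" "\<bar>d\<bar> \<noteq> \<infinity>"
  shows "max (a - b) (c - d) = max (a + d) (c + b) - (b + d)"
proof -
  obtain b' d' where "b = ereal b'" "d = ereal d'" using assms(3,4) by (cases b; cases d) auto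
  then show ?thesis using assms(1,2) by (cases a; cases c) (auto simp: max_def)
qed

lemma frac_add:
  assumes "f \<in> trop_frac" "g \<in> trop_frac"
  shows "(\<lambda>x. f x + g x) \<in> trop_frac"
proof -
  obtain P Q where f: "f = (\<lambda>x. trop_eval P x - trop_eval Q x)" "finite P" "finite Q" "Q \<noteq> {}"
    using assms(1) unfolding trop_frac_def by auto
  obtain P' Q' where g: "g = (\<lambda>x. trop_eval P' x - trop_eval Q' x)" "finite P'" "finite Q'" "Q' \<noteq> {}"
    using assms(2) unfolding trop_frac_def by auto
  have "(\<lambda>x. f x + g x) = (\<lambda>x. trop_eval (pmul P P') x - trop_eval (pmul Q Q') x)"
    using f g by (intro ext) (simp add: eval_mul eval_not_inf eval_nonempty_real ereal_add_aux)
  moreover have "finite (pmul P P')" "finite (pmul Q Q')" "pmul Q Q' \<noteq> {}"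
    using f g by (simp_all add: pmul_finite pmul_ne)
  ultimately show ?thesis unfolding trop_frac_def by blast
qed

lemma frac_max:
  assumes "f \<in> trop_frac" "g \<in> trop_frac"
  shows "(\<lambda>x. max (f x) (g x)) \<in> trop_frac"
proof -
  obtain P Q where f: "f = (\<lambda>x. trop_eval P x - trop_eval Q x)" "finite P" "finite Q" "Q \<noteq> {}"
    using assms(1) unfolding trop_frac_def by auto
  obtain P' Q' where g: "g = (\<lambda>x. trop_eval P' x - trop_eval Q' x)" "finite P'" "finite Q'" "Q' \<noteq> {}"
    using assms(2) unfolding trop_frac_def by auto
  have "(\<lambda>x. max (f x) (g x)) = (\<lambda>x. trop_eval (pmul P Q' \<union> pmul P' Q) x - trop_eval (pmul Q Q') x)"
    using f g by (intro ext) (simp add: eval_union eval_mul eval_not_inf eval_nonempty_real ereal_max_aux)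
  moreover have "finite (pmul P Q' \<union> pmul P' Q)" "finite (pmul Q Q')" "pmul Q Q' \<noteq> {}"
    using f g by (simp_all add: pmul_finite pmul_ne)
  ultimately show ?thesis unfolding trop_frac_def by blast
qed

lemma Lm_cont: "continuous_on UNIV (\<lambda>y. Lm m y)"
  unfolding Lm_def by (intro continuous_intros)

lemma Max_cont:
  assumes "finite P" "P \<noteq> {}"
  shows "continuous_on UNIV (\<lambda>y. Max ((\<lambda>m. Lm m y) ` P))"
  using assms
proof (induction P rule: finite_ne_induct)
  case (singleton x)
  then show ?case by (simp add: Lm_cont)
next
  case (insert x F)
  then show ?case by (simp add: Lm_cont continuous_on_max)
qed

lemma frac_cases:
  assumes "f \<in> trop_frac"
  shows "f = (\<lambda>y. -\<infinity>) \<or> (\<exists>u. continuous_on UNIV u \<and> f = (\<lambda>y. ereal (u y)))"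
proof -
  obtain P Q where f: "f = (\<lambda>x. trop_eval P x - trop_eval Q x)" "finite P" "finite Q" "Q \<noteq> {}"
    using assms unfolding trop_frac_def by auto
  show ?thesis
  proof (cases "P = {}")
    case True
    then show ?thesis using f by (auto simp: eval_empty eval_fin)
  next
    case False
    then have "f = (\<lambda>y. ereal (Max ((\<lambda>m. Lm m y) ` P) - Max ((\<lambda>m. Lm m y) ` Q)))"
      using f by (auto simp: eval_fin)
    moreover have "continuous_on UNIV (\<lambda>y. Max ((\<lambda>m. Lm m y) ` P) - Max ((\<lambda>m. Lm m y) ` Q))"
      using f False by (intro continuous_on_diff Max_cont) auto
    ultimately show ?thesis by blast
  qed
qed

lemma closed_eq_frac:
  assumes "f \<in> trop_frac" "g \<in> trop_frac"
  shows "closed {y. f y = g y}"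
proof -
  have c: "closed {y. u y = v y}" if "continuous_on UNIV u" "continuous_on UNIV (v::real^'a \<Rightarrow> real)" for u v
    using that by (intro closed_Collect_eq) auto
  show ?thesis
    using frac_cases[OF assms(1)] frac_cases[OF assms(2)]
    by (elim disjE exE conjE) (simp_all add: c)
qed

lemma eval_ge: "m \<in> P \<Longrightarrow> ereal (Lm m y) \<le> trop_eval P y"
  unfolding trop_eval_def Lm_def by (rule SUP_upper)

lemma sum_e2: "(\<Sum>j\<in>UNIV. real (if j = i then 2 else 1) * (y::real^'n::finite) $ j) = (\<Sum>j\<in>UNIV. y $ j) + y $ i"
proof -
  have "(\<Sum>j\<in>UNIV. real (if j = i then 2 else 1) * y $ j) = (\<Sum>j\<in>UNIV. y $ j + (if j = i then y $ j else 0))"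
    by (intro sum.cong) auto
  also have "\<dots> = (\<Sum>j\<in>UNIV. y $ j) + y $ i" by (simp add: sum.distrib)
  finally show ?thesis .
qed

lemma sum_e0: "(\<Sum>j\<in>UNIV. real (if j = i then 0 else 1) * (y::real^'n::finite) $ j) = (\<Sum>j\<in>UNIV. y $ j) - y $ i"
proof -
  have "(\<Sum>j\<in>UNIV. real (if j = i then 0 else 1) * y $ j) = (\<Sum>j\<in>UNIV. y $ j - (if j = i then y $ j else 0))"
    by (intro sum.cong) auto
  also have "\<dots> = (\<Sum>j\<in>UNIV. y $ j) - y $ i" by (simp add: sum_subtractf)
  finally show ?thesis .
qed

lemma separate:
  fixes A :: "(real^'n::finite) set"
  assumes "closed A" "x \<notin> A"
  shows "\<exists>f g. f \<in> trop_frac \<and> g \<in> trop_frac \<and> (\<forall>y\<in>A. f y = g y) \<and> f x \<noteq> g x"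
proof -
  obtain e where e: "e > 0" "ball x e \<subseteq> - A"
    using assms open_contains_ball[of "- A"] by (auto simp: open_Compl)
  define r where "r = e / real CARD('n)"
  have r: "r > 0" using e by (simp add: r_def)
  have far: "\<exists>i. r \<le> \<bar>y $ i - x $ i\<bar>" if "y \<in> A" for y
  proof (rule ccontr)
    assume "\<not> ?thesis"
    then have lt: "\<And>i. \<bar>y $ i - x $ i\<bar> < r" by (auto simp: not_le)
    have "norm (y - x) \<le> (\<Sum>i\<in>UNIV. \<bar>(y - x) $ i\<bar>)" by (rule norm_le_l1_cart)
    also have "\<dots> < (\<Sum>i\<in>(UNIV::'n set). r)"
      using lt by (intro sum_strict_mono) auto
    also have "\<dots> = e" by (simp add: r_def)
    finally have "dist x y < e" by (simp add: dist_norm norm_minus_commute)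
    then show False using e that by auto
  qed
  define e2 where "e2 = (\<lambda>i. ((\<lambda>j. if j = i then 2 else 1) :: 'n \<Rightarrow> nat, - x $ i))"
  define e0 where "e0 = (\<lambda>i. ((\<lambda>j. if j = i then 0 else 1) :: 'n \<Rightarrow> nat, x $ i))"
  define m0 where "m0 = ((\<lambda>j. 1) :: 'n \<Rightarrow> nat, r)"
  define Q where "Q = range e2 \<union> range e0"
  define P where "P = {m0} \<union> Q"
  define M where "M = {((\<lambda>j. 1) :: 'n \<Rightarrow> nat, 0::real)}"
  have L2: "Lm (e2 i) y = - x $ i + ((\<Sum>j\<in>UNIV. y $ j) + y $ i)" for i y
    unfolding Lm_def e2_def by (simp add: sum_e2)
  have L0: "Lm (e0 i) y = x $ i + ((\<Sum>j\<in>UNIV. y $ j) - y $ i)" for i y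
    unfolding Lm_def e0_def using sum_e0[of i y] by simp
  have Lm0: "Lm m0 y = r + (\<Sum>j\<in>UNIV. y $ j)" for y
    unfolding Lm_def m0_def by simp
  have LM: "Lm ((\<lambda>j. 1) :: 'n \<Rightarrow> nat, 0::real) y = (\<Sum>j\<in>UNIV. y $ j)" for y
    unfolding Lm_def by simp
  have finQ: "finite Q" "Q \<noteq> {}" by (auto simp: Q_def)
  have finP: "finite P" "P \<noteq> {}" using finQ by (auto simp: P_def)
  have finM: "finite M" "M \<noteq> {}" by (auto simp: M_def)
  define f where "f = (\<lambda>y. trop_eval P y - trop_eval M y)"
  define g where "g = (\<lambda>y. trop_eval Q y - trop_eval M y)"
  have fS: "f \<in> trop_frac" unfolding trop_frac_def f_def using finP finM by blast
  have gS: "g \<in> trop_frac" unfolding trop_frac_def g_def using finQ finM by blast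
  have single: "trop_eval {m} y = ereal (Lm m y)" for m y
    by (simp add: eval_fin)
  have onA: "f y = g y" if yA: "y \<in> A" for y
  proof -
    obtain i where i: "r \<le> \<bar>y $ i - x $ i\<bar>" using far[OF yA] by blast
    have "ereal (Lm m0 y) \<le> trop_eval Q y"
    proof (cases "r \<le> y $ i - x $ i")
      case True
      have "ereal (Lm m0 y) \<le> ereal (Lm (e2 i) y)" using True by (simp add: Lm0 L2)
      also have "\<dots> \<le> trop_eval Q y" by (rule eval_ge) (simp add: Q_def)
      finally show ?thesis .
    next
      case False
      then have "r \<le> x $ i - y $ i" using i by (auto simp: abs_if split: if_splits)
      then have "ereal (Lm m0 y) \<le> ereal (Lm (e0 i) y)" by (simp add: Lm0 L0)
      also have "\<dots> \<le> trop_eval Q y" by (rule eval_ge) (simp add: Q_def)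
      finally show ?thesis .
    qed
    then have "trop_eval P y = trop_eval Q y"
      unfolding P_def eval_union single by (simp add: max_def)
    then show ?thesis by (simp add: f_def g_def)
  qed
  have Qx: "trop_eval Q x = ereal (\<Sum>j\<in>UNIV. x $ j)"
  proof -
    have "(\<lambda>m. Lm m x) ` Q = {\<Sum>j\<in>UNIV. x $ j}"
      using finQ by (auto simp: Q_def L2 L0 intro!: image_eqI[where x="e2 undefined"])
    then show ?thesis using finQ by (simp add: eval_fin)
  qed
  have Px: "trop_eval P x = ereal (r + (\<Sum>j\<in>UNIV. x $ j))"
    unfolding P_def eval_union single Qx Lm0 using r by simp
  have Mx: "trop_eval M x = ereal (\<Sum>j\<in>UNIV. x $ j)"
    unfolding M_def single LM by simp
  have "f x \<noteq> g x" unfolding f_def g_def Px Qx Mx using r by simp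
  then show ?thesis using fS gS onA by blast
qed

theorem proposition3p9:
  shows "{trop_V E | E. trop_congruence (trop_frac :: (real^'n::finite \<Rightarrow> ereal) set) E}
         = {A :: (real^'n) set. closed A}"
proof (intro equalityI subsetI)
  fix B :: "(real^'n) set"
  assume "B \<in> {trop_V E | E. trop_congruence (trop_frac :: (real^'n::finite \<Rightarrow> ereal) set) E}"
  then obtain E where B: "B = trop_V E" and E: "trop_congruence (trop_frac :: (real^'n::finite \<Rightarrow> ereal) set) E"
    by blast
  have sub: "E \<subseteq> trop_frac \<times> trop_frac" using E by (simp add: trop_congruence_def equiv_def)
  have "trop_V E = (\<Inter>p\<in>E. {y. fst p y = snd p y})" unfolding trop_V_def by fastforce
  moreover have "closed (\<Inter>p\<in>E. {y. fst p y = snd p y})"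
  proof (intro closed_INT ballI)
    fix p assume "p \<in> E"
    then have "fst p \<in> trop_frac" "snd p \<in> trop_frac" using sub by auto
    then show "closed {y. fst p y = snd p y}" by (rule closed_eq_frac)
  qed
  ultimately show "B \<in> {A. closed A}" using B by simp
next
  fix A :: "(real^'n) set"
  assume "A \<in> {A. closed A}"
  then have cA: "closed A" by simp
  define E where "E = {(f, g). f \<in> (trop_frac :: (real^'n::finite \<Rightarrow> ereal) set) \<and> g \<in> trop_frac \<and> (\<forall>y\<in>A. f y = g y)}"
  have "equiv trop_frac E"
    unfolding equiv_def refl_on_def sym_def trans_def E_def by auto
  moreover have "\<forall>(a,b)\<in>E. \<forall>(c,d)\<in>E.
        ((\<lambda>x. max (a x) (c x)), (\<lambda>x. max (b x) (d x))) \<in> E \<and>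
        ((\<lambda>x. a x + c x), (\<lambda>x. b x + d x)) \<in> E"
    unfolding E_def by (auto intro: frac_add frac_max)
  ultimately have cong: "trop_congruence trop_frac E" unfolding trop_congruence_def by blast
  have "trop_V E = A"
  proof (intro equalityI subsetI)
    fix x assume x: "x \<in> trop_V E"
    show "x \<in> A"
    proof (rule ccontr)
      assume "x \<notin> A"
      then obtain f g where "f \<in> trop_frac" "g \<in> trop_frac" "\<forall>y\<in>A. f y = g y" "f x \<noteq> g x"
        using separate[OF cA] by blast
      then have "(f, g) \<in> E" "f x \<noteq> g x" unfolding E_def by auto
      then show False using x unfolding trop_V_def by auto
    qed
  next
    fix x assume "x \<in> A"
    then show "x \<in> trop_V E" unfolding trop_V_def E_def by auto
  qed
  then show "A \<in> {trop_V E | E. trop_congruence (trop_frac :: (real^'n::finite \<Rightarrow> ereal) set) E}"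
    using cong by blast
qed

end
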